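(* Assume the setup below. Suppose that at time $t_0$ the set $\{\delta X(s,\alpha(t_0)):s\in T\}$ satisfies Condition B at the point $0$ with constants $m_0\ge0$, $\kappa>1$, $\delta>0$, $\sigma>0$, $I_0>0$. Let $0<\eta\le I_0$ and $0<\delta_0<\delta$ with $\nu(G_\eta(t_0))>1-\delta_0$. Then for every $\ell$ with $0<\ell\le\eta$, $$\nu\big(\{s\in T:0\le\delta X(s,\alpha(t_0))<\ell\}\big)<m_0+\delta_0\,(1+\sigma)\left(\frac{\ell}{\eta}\right)^{\log(1+\sigma)/\log\kappa}.$$
   Context: Setup. Fix integers $n\ge1$, $K\ge 2$. $T\subset\mathbb R^n$ is a finite set; each $s\in T$ has a class $i(s)\in\{1,\dots,K\}$ and a weight $\nu(s)\in(0,1]$ with $\sum_{s\in T}\nu(s)=1$; for $A\subset T$, $\nu(A)=\sum_{s\in A}\nu(s)$. A parametrized family $X(\cdot,\alpha):\mathbb R^n\to\mathbb R^K$ is given; $\delta X(s,\alpha)=X_{i(s)}(s,\alpha)-\max_{j\ne i(s)}X_j(s,\alpha)$. A training trajectory is a family of parameters $\alpha(t)$ indexed by times $t$. Good set: $G_\eta(t)=\{s\in T:\delta X(s,\alpha(t))>\eta\}$. For an interval $I\subset\mathbb R$ with center $c$ and $\lambda>0$, $\lambda I=\{c+\lambda(x-c):x\in I\}$; $|I|$ is the length of $I$. Condition B at the point $0$ at time $t_0$ with constants $m_0\ge0$, $\kappa>1$, $\delta>0$, $\sigma>0$, $I_0>0$: for every interval $I\subset\mathbb R$ containing $0$ with $|I|<I_0$,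 $$\nu(\{s\in T:\delta X(s,\alpha(t_0))\in\kappa I\})\ge\min\Big\{\delta,\ \max\big\{m_0,\ (1+\sigma)\,\nu(\{s\in T:\delta X(s,\alpha(t_0))\in I\})\big\}\Big\}.$$ *)

theory Defs
  imports "HOL-Analysis.Analysis"
begin

definition wmeas :: "('a \<Rightarrow> real) \<Rightarrow> 'a set \<Rightarrow> real" where
  "wmeas \<nu> A = (\<Sum>s\<in>A. \<nu> s)"

definition margin :: "('p \<Rightarrow> real^'n \<Rightarrow> real^'k) \<Rightarrow> (real^'n \<Rightarrow> 'k::finite)
    \<Rightarrow> real^'n \<Rightarrow> 'p \<Rightarrow> real" where
  "margin X cls s a = X a s $ cls s - Max {X a s $ j | j. j \<noteq> cls s}"

definition good_set :: "(real^'n) set \<Rightarrow> ('p \<Rightarrow> real^'n \<Rightarrow> real^'k) \<Rightarrow> (real^'n \<Rightarrow> 'k::finite)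
    \<Rightarrow> (real \<Rightarrow> 'p) \<Rightarrow> real \<Rightarrow> real \<Rightarrow> (real^'n) set" where
  "good_set T X cls \<alpha> \<eta> t = {s\<in>T. margin X cls s (\<alpha> t) > \<eta>}"

definition ilen :: "real set \<Rightarrow> real" where
  "ilen I = Sup I - Inf I"

definition icenter :: "real set \<Rightarrow> real" where
  "icenter I = (Sup I + Inf I) / 2"

definition idilate :: "real \<Rightarrow> real set \<Rightarrow> real set" where
  "idilate c I = (\<lambda>x. icenter I + c * (x - icenter I)) ` I"

text \<open>Condition B at the point 0 for the weighted finite family of values f(s), s in T.
  Intervals: nonempty bounded convex subsets of the real line (any endpoint type).\<close>
definition conditionB :: "'a set \<Rightarrow> ('a \<Rightarrow> real) \<Rightarrow> ('a \<Rightarrow> real)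
    \<Rightarrow> real \<Rightarrow> real \<Rightarrow> real \<Rightarrow> real \<Rightarrow> real \<Rightarrow> bool" where
  "conditionB T \<nu> f m0 \<kappa> \<delta> \<sigma> I0 \<longleftrightarrow>
     (\<forall>I::real set. is_interval I \<and> bounded I \<and> 0 \<in> I \<and> ilen I < I0 \<longrightarrow>
        wmeas \<nu> {s\<in>T. f s \<in> idilate \<kappa> I}
          \<ge> min \<delta> (max m0 ((1 + \<sigma>) * wmeas \<nu> {s\<in>T. f s \<in> I})))"

end

theory Submission
  imports Defs
begin

lemma ivl_props:
  fixes c r k :: real
  assumes r: "r > 0" and k: "k > 0"
  shows "is_interval {c-r..<c+r}" "bounded {c-r..<c+r}" "ilen {c-r..<c+r} = 2*r"
    "idilate k {c-r..<c+r} = {c-k*r..<c+k*r}"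
proof -
  show "is_interval {c-r..<c+r}" unfolding is_interval_1 by auto
  show "bounded {c-r..<c+r}" unfolding bounded_real
    by (rule exI[of _ "\<bar>c\<bar> + r"]) auto
  show "ilen {c-r..<c+r} = 2*r" using r by (simp add: ilen_def)
  have ce: "icenter {c-r..<c+r} = c" using r by (simp add: icenter_def)
  show "idilate k {c-r..<c+r} = {c-k*r..<c+k*r}"
    unfolding idilate_def ce
  proof (intro equalityI subsetI)
    fix y assume "y \<in> (\<lambda>x. c + k * (x - c)) ` {c - r..<c + r}"
    then obtain x where x: "x \<in> {c - r..<c + r}" "y = c + k*(x-c)" by auto
    have "k*(x-c) \<ge> k*(-r)" using x k by (intro mult_left_mono) auto
    moreover have "k*(x-c) < k*r" using x k by (intro mult_strict_left_mono) auto
    ultimately show "y \<in> {c-k*r..<c+k*r}" using x by auto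
  next
    fix y assume y: "y \<in> {c-k*r..<c+k*r}"
    define x where "x = c + (y-c)/k"
    have "y = c + k*(x-c)" using k by (simp add: x_def)
    moreover have "x \<in> {c - r..<c + r}"
      using y k by (auto simp: x_def field_simps)
    ultimately show "y \<in> (\<lambda>x. c + k * (x - c)) ` {c - r..<c + r}" by blast
  qed
qed

theorem mainTheorem7:
  fixes T :: "(real^'n) set"
    and cls :: "real^'n \<Rightarrow> 'k::finite"
    and \<nu> :: "real^'n \<Rightarrow> real"
    and X :: "'p \<Rightarrow> real^'n \<Rightarrow> real^'k"
    and \<alpha> :: "real \<Rightarrow> 'p"
    and t0 m0 \<kappa> \<delta> \<sigma> I0 \<eta> \<delta>0 :: real
  assumes K: "CARD('k) \<ge> 2"
    and T_fin: "finite T"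
    and \<nu>_pos: "\<forall>s\<in>T. 0 < \<nu> s \<and> \<nu> s \<le> 1"
    and \<nu>_sum: "wmeas \<nu> T = 1"
    and condB: "conditionB T \<nu> (\<lambda>s. margin X cls s (\<alpha> t0)) m0 \<kappa> \<delta> \<sigma> I0"
    and m0: "m0 \<ge> 0" and \<kappa>: "\<kappa> > 1" and \<delta>: "\<delta> > 0" and \<sigma>: "\<sigma> > 0" and I0: "I0 > 0"
    and \<eta>: "0 < \<eta>" "\<eta> \<le> I0"
    and \<delta>0: "0 < \<delta>0" "\<delta>0 < \<delta>"
    and good: "wmeas \<nu> (good_set T X cls \<alpha> \<eta> t0) > 1 - \<delta>0"
  shows "\<forall>l. 0 < l \<and> l \<le> \<eta> \<longrightarrow>
      wmeas \<nu> {s\<in>T. 0 \<le> margin X cls s (\<alpha> t0) \<and> margin X cls s (\<alpha> t0) < l}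
        < m0 + \<delta>0 * (1 + \<sigma>) * (l / \<eta>) powr (ln (1 + \<sigma>) / ln \<kappa>)"
proof (intro allI impI)
  fix l :: real assume l: "0 < l \<and> l \<le> \<eta>"
  define f where "f = (\<lambda>s. margin X cls s (\<alpha> t0))"
  define \<mu> where "\<mu> = (\<lambda>A. wmeas \<nu> {s\<in>T. f s \<in> A})"
  have mono: "\<mu> A \<le> \<mu> B" if "A \<subseteq> B" for A B
    unfolding \<mu>_def wmeas_def using that T_fin \<nu>_pos
    by (intro sum_mono2) auto
  have nonneg: "\<mu> A \<ge> 0" for A
    unfolding \<mu>_def wmeas_def using \<nu>_pos by (intro sum_nonneg) auto
  have low: "\<mu> {..\<eta>} < \<delta>0"
  proof -
    have "T = {s\<in>T. f s \<in> {..\<eta>}} \<union> good_set T X cls \<alpha> \<eta> t0"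
      "{s\<in>T. f s \<in> {..\<eta>}} \<inter> good_set T X cls \<alpha> \<eta> t0 = {}"
      by (auto simp: good_set_def f_def)
    hence "wmeas \<nu> T = \<mu> {..\<eta>} + wmeas \<nu> (good_set T X cls \<alpha> \<eta> t0)"
      unfolding \<mu>_def wmeas_def using T_fin
      by (metis (no_types, lifting) finite_Un sum.union_disjoint)
    thus ?thesis using \<nu>_sum good by linarith
  qed
  define J where "J = (\<lambda>j::nat. {l/2 - l*\<kappa>^j/2 ..< l/2 + l*\<kappa>^j/2})"
  define L where "L = log \<kappa> (\<eta>/l)"
  define n where "n = nat \<lfloor>L\<rfloor>"
  have L0: "L \<ge> 0" unfolding L_def using l \<kappa> by simp
  have nL: "real n \<le> L" "L < real n + 1" unfolding n_def using L0 by linarith+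
  have kn: "l * \<kappa>^n \<le> \<eta>"
  proof -
    have "\<kappa>^n = \<kappa> powr real n" using \<kappa> by (simp add: powr_realpow)
    also have "\<dots> \<le> \<kappa> powr L" using \<kappa> nL by (intro powr_mono) auto
    also have "\<dots> = \<eta>/l" unfolding L_def using \<kappa> l \<eta> by simp
    finally show ?thesis using l by (simp add: field_simps)
  qed
  have kpos: "\<kappa>^j \<ge> 1" for j::nat using \<kappa> by simp
  have Jsub: "J j \<subseteq> {..\<eta>}" if "j \<le> n" for j
  proof -
    have "\<kappa>^j \<le> \<kappa>^n" using that \<kappa> by (intro power_increasing) auto
    hence "l*\<kappa>^j \<le> l*\<kappa>^n" using l by simp
    moreover have "l \<le> l*\<kappa>^j" using kpos[of j] l by simp
    ultimately show ?thesis using kn unfolding J_def by auto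
  qed
  have step: "(1+\<sigma>)^j * \<mu> (J 0) \<le> \<mu> (J j)" if "j \<le> n" for j
    using that
  proof (induction j)
    case 0 then show ?case by simp
  next
    case (Suc j)
    have r: "l*\<kappa>^j/2 > 0" using l \<kappa> by simp
    note P = ivl_props[OF r, of \<kappa> "l/2"]
    have JJ: "J j = {l/2 - l*\<kappa>^j/2 ..< l/2 + l*\<kappa>^j/2}" by (simp add: J_def)
    have JS: "idilate \<kappa> (J j) = J (Suc j)"
      unfolding JJ P(4)[OF order.strict_trans[OF zero_less_one \<kappa>]] J_def by (simp add: field_simps)
    have z: "0 \<in> J j"
    proof -
      have "l \<le> l*\<kappa>^j" using kpos[of j] l by simp
      moreover have "l/2 - l*\<kappa>^j/2 \<le> 0" "0 < l/2 + l*\<kappa>^j/2" using calculation l by linarith+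
      ultimately show ?thesis unfolding J_def by auto
    qed
    have "\<kappa>^j < \<kappa>^n" using Suc.prems \<kappa> by (intro power_strict_increasing) auto
    hence "l*\<kappa>^j < l*\<kappa>^n" using l by simp
    moreover have "ilen (J j) = l*\<kappa>^j" using P(3) JJ \<kappa> by simp
    ultimately have "ilen (J j) < I0" using kn \<eta> by linarith
    hence "\<mu> (J (Suc j)) \<ge> min \<delta> (max m0 ((1 + \<sigma>) * \<mu> (J j)))"
    proof -
      have "is_interval (J j)" "bounded (J j)" using P(1,2) \<kappa> JJ by simp_all
      with condB z \<open>ilen (J j) < I0\<close> have
        "wmeas \<nu> {s\<in>T. f s \<in> idilate \<kappa> (J j)} \<ge> min \<delta> (max m0 ((1 + \<sigma>) * wmeas \<nu> {s\<in>T. f s \<in> J j}))"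
        unfolding conditionB_def f_def by blast
      thus ?thesis unfolding JS \<mu>_def .
    qed
    moreover have "\<mu> (J (Suc j)) < \<delta>"
      using mono[OF Jsub[OF Suc.prems]] low \<delta>0 by linarith
    ultimately have "\<mu> (J (Suc j)) \<ge> (1+\<sigma>) * \<mu> (J j)" by linarith
    moreover have "(1+\<sigma>)^j * \<mu> (J 0) \<le> \<mu> (J j)" using Suc by simp
    hence "(1+\<sigma>) * ((1+\<sigma>)^j * \<mu> (J 0)) \<le> (1+\<sigma>) * \<mu> (J j)" using \<sigma> by (intro mult_left_mono) auto
    ultimately show ?case by (simp add: mult.assoc)
  qed
  have A: "(1+\<sigma>)^n * \<mu> (J 0) < \<delta>0"
    using step[of n] mono[OF Jsub[of n]] low by linarith
  have eq0: "{s\<in>T. 0 \<le> f s \<and> f s < l} = {s\<in>T. f s \<in> J 0}" by (auto simp: J_def)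
  have B: "1 / (1+\<sigma>)^n \<le> (1+\<sigma>) * (l/\<eta>) powr (ln (1+\<sigma>) / ln \<kappa>)"
  proof -
    have "(l/\<eta>) powr (ln (1+\<sigma>) / ln \<kappa>) = exp (ln (1+\<sigma>) * (ln (l/\<eta>) / ln \<kappa>))"
      using l \<eta> by (simp add: powr_def mult_ac)
    also have "ln (l/\<eta>) / ln \<kappa> = - L"
      unfolding L_def log_def using l \<eta> by (simp add: ln_div divide_simps)
    also have "exp (ln (1+\<sigma>) * (-L)) = (1+\<sigma>) powr (-L)"
      using \<sigma> by (simp add: powr_def mult_ac)
    finally have e: "(l/\<eta>) powr (ln (1+\<sigma>) / ln \<kappa>) = (1+\<sigma>) powr (-L)" .
    have "(1+\<sigma>) powr (- (real n + 1)) \<le> (1+\<sigma>) powr (-L)"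
      using \<sigma> nL by (intro powr_mono) auto
    moreover have "(1+\<sigma>) * (1+\<sigma>) powr (- (real n + 1)) = 1 / (1+\<sigma>)^n"
    proof -
      have "(1+\<sigma>) powr (- (real n + 1)) = 1 / (1+\<sigma>) powr (real (Suc n))"
        by (metis powr_minus_divide of_nat_Suc add.commute)
      also have "\<dots> = 1 / (1+\<sigma>)^(Suc n)" using \<sigma> by (simp only: powr_realpow)
      finally show ?thesis using \<sigma> by simp
    qed
    ultimately show ?thesis using e \<sigma> by (metis mult_left_mono less_eq_real_def add_pos_pos zero_less_one)
  qed
  have "\<mu> (J 0) < \<delta>0 / (1+\<sigma>)^n" using A \<sigma> by (simp add: field_simps)
  also have "\<dots> \<le> \<delta>0 * ((1+\<sigma>) * (l/\<eta>) powr (ln (1+\<sigma>) / ln \<kappa>))"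
    using B \<delta>0 mult_left_mono[OF B, of \<delta>0] by simp
  finally show "wmeas \<nu> {s\<in>T. 0 \<le> margin X cls s (\<alpha> t0) \<and> margin X cls s (\<alpha> t0) < l}
        < m0 + \<delta>0 * (1 + \<sigma>) * (l / \<eta>) powr (ln (1 + \<sigma>) / ln \<kappa>)"
    using m0 eq0 unfolding \<mu>_def f_def by (simp add: mult.assoc)
qed

end
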